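(* There are no rational numbers (in particular, no integers) $x_1,x_2,x_3,d_1,d_2,d_3,L$ with $x_1,x_2,x_3,d_1,d_2,d_3>0$ such that $\operatorname{rank}N\le 2$, $\operatorname{rank}N_1=2$, $\operatorname{rank}N_2=2$, and $\tilde p_2=\tilde p_3=\dots=\tilde p_8=0$. Likewise there are no such positive rational numbers with $\operatorname{rank}N\le 2$, $\operatorname{rank}N_1=\operatorname{rank}N_2=2$ satisfying $p_1=p_2=p_3=0$.
   Context: Define $p_1=x_2^2+x_3^2-d_1^2$, $p_2=x_3^2+x_1^2-d_2^2$, $p_3=x_1^2+x_2^2-d_3^2$, and $\tilde p_2=p_1+p_2+p_3$, $\tilde p_3=d_1p_1+d_2p_2+d_3p_3$, $\tilde p_4=x_1p_1+x_2p_2+x_3p_3$, $\tilde p_5=x_1d_1p_1+x_2d_2p_2+x_3d_3p_3$, $\tilde p_6=x_1^2p_1+x_2^2p_2+x_3^2p_3$, $\tilde p_7=d_1^2p_1+d_2^2p_2+d_3^2p_3$, $\tilde p_8=x_1^2d_1^2p_1+x_2^2d_2^2p_2+x_3^2d_3^2p_3$. $N$ is the $3\times 7$ matrix whose $i$-th row is $(1,\ d_i,\ x_i,\ x_id_i,\ x_i^2,\ d_i^2,\ x_i^2d_i^2)$; $N_1$ is the $3\times 2$ matrix with rows $(1,d_i)$; $N_2$ is the $3\times 2$ matrix with rows $(1,x_i)$, $i=1,2,3$. Ranks are over $\mathbb{Q}$. *)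

theory Defs
  imports "Jordan_Normal_Form.DL_Rank"
begin

definition p1 :: "rat \<Rightarrow> rat \<Rightarrow> rat \<Rightarrow> rat \<Rightarrow> rat \<Rightarrow> rat \<Rightarrow> rat" where
  "p1 x1 x2 x3 d1 d2 d3 = x2^2 + x3^2 - d1^2"
definition p2 :: "rat \<Rightarrow> rat \<Rightarrow> rat \<Rightarrow> rat \<Rightarrow> rat \<Rightarrow> rat \<Rightarrow> rat" where
  "p2 x1 x2 x3 d1 d2 d3 = x3^2 + x1^2 - d2^2"
definition p3 :: "rat \<Rightarrow> rat \<Rightarrow> rat \<Rightarrow> rat \<Rightarrow> rat \<Rightarrow> rat \<Rightarrow> rat" where
  "p3 x1 x2 x3 d1 d2 d3 = x1^2 + x2^2 - d3^2"

definition pcomb :: "rat \<Rightarrow> rat \<Rightarrow> rat \<Rightarrow> rat \<Rightarrow> rat \<Rightarrow> rat \<Rightarrow> rat \<Rightarrow> rat \<Rightarrow> rat \<Rightarrow> rat" where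
  "pcomb w1 w2 w3 x1 x2 x3 d1 d2 d3 =
     w1 * p1 x1 x2 x3 d1 d2 d3 + w2 * p2 x1 x2 x3 d1 d2 d3 + w3 * p3 x1 x2 x3 d1 d2 d3"

definition pt2 where "pt2 x1 x2 x3 d1 d2 d3 = pcomb 1 1 1 x1 x2 x3 d1 d2 d3"
definition pt3 where "pt3 x1 x2 x3 d1 d2 d3 = pcomb d1 d2 d3 x1 x2 x3 d1 d2 d3"
definition pt4 where "pt4 x1 x2 x3 d1 d2 d3 = pcomb x1 x2 x3 x1 x2 x3 d1 d2 d3"
definition pt5 where "pt5 x1 x2 x3 d1 d2 d3 = pcomb (x1*d1) (x2*d2) (x3*d3) x1 x2 x3 d1 d2 d3"
definition pt6 where "pt6 x1 x2 x3 d1 d2 d3 = pcomb (x1^2) (x2^2) (x3^2) x1 x2 x3 d1 d2 d3"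
definition pt7 where "pt7 x1 x2 x3 d1 d2 d3 = pcomb (d1^2) (d2^2) (d3^2) x1 x2 x3 d1 d2 d3"
definition pt8 where "pt8 x1 x2 x3 d1 d2 d3 =
  pcomb (x1^2*d1^2) (x2^2*d2^2) (x3^2*d3^2) x1 x2 x3 d1 d2 d3"

definition Nrow :: "rat \<Rightarrow> rat \<Rightarrow> rat list" where
  "Nrow x d = [1, d, x, x*d, x^2, d^2, x^2*d^2]"

definition Nmat :: "rat \<Rightarrow> rat \<Rightarrow> rat \<Rightarrow> rat \<Rightarrow> rat \<Rightarrow> rat \<Rightarrow> rat mat" where
  "Nmat x1 x2 x3 d1 d2 d3 = mat_of_rows_list 7 [Nrow x1 d1, Nrow x2 d2, Nrow x3 d3]"
definition N1mat :: "rat \<Rightarrow> rat \<Rightarrow> rat \<Rightarrow> rat mat" where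
  "N1mat d1 d2 d3 = mat_of_rows_list 2 [[1, d1], [1, d2], [1, d3]]"
definition N2mat :: "rat \<Rightarrow> rat \<Rightarrow> rat \<Rightarrow> rat mat" where
  "N2mat x1 x2 x3 = mat_of_rows_list 2 [[1, x1], [1, x2], [1, x3]]"

definition rank3 :: "rat mat \<Rightarrow> nat" where
  "rank3 A = vec_space.rank 3 A"

end

theory Submission imports Defs begin

lemma mv3: "a \<in> carrier_vec 3 \<Longrightarrow> i < 3 \<Longrightarrow> (mat_of_cols 3 [u,v,w] *\<^sub>v a) $ i = u$i*a$0 + v$i*a$1 + w$i*a$2" for a u v w :: "rat vec"
  by (simp add: mult_mat_vec_def scalar_prod_def numeral_3_eq_3 mat_of_cols_def eval_nat_numeral)

definition D3 :: "rat vec \<Rightarrow> rat vec \<Rightarrow> rat vec \<Rightarrow> rat" where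
 "D3 u v w = u$0*(v$1*w$2 - v$2*w$1) - u$1*(v$0*w$2-v$2*w$0) + u$2*(v$0*w$1 - v$1*w$0)"

lemma cof: "(u0*(v1*w2 - v2*w1) - u1*(v0*w2-v2*w0) + u2*(v0*w1 - v1*w0)) * a0 = (v1*w2 - v2*w1)*(u0*a0+v0*a1+w0*a2) - (v0*w2-v2*w0)*(u1*a0+v1*a1+w1*a2) + (v0*w1 - v1*w0)*(u2*a0+v2*a1+w2*a2)" for u0 :: rat
  by (simp add: algebra_simps)
lemma cyc1: "(u0*(v1*w2 - v2*w1) - u1*(v0*w2-v2*w0) + u2*(v0*w1 - v1*w0)) = (v0*(w1*u2 - w2*u1) - v1*(w0*u2-w2*u0) + v2*(w0*u1 - w1*u0))" for u0 :: rat
  by (simp add: algebra_simps)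
lemma cyc2: "(u0*(v1*w2 - v2*w1) - u1*(v0*w2-v2*w0) + u2*(v0*w1 - v1*w0)) = (w0*(u1*v2 - u2*v1) - w1*(u0*v2-u2*v0) + w2*(u0*v1 - u1*v0))" for u0 :: rat
  by (simp add: algebra_simps)

lemma rank_ge3:
  fixes A :: "rat mat"
  assumes A: "A \<in> carrier_mat 3 nc" and ijk: "i < nc" "j < nc" "k < nc"
    and D: "D3 (col A i) (col A j) (col A k) \<noteq> 0"
  shows "vec_space.rank 3 A \<ge> 3"
proof -
  let ?u = "col A i" let ?v = "col A j" let ?w = "col A k"
  define B where "B = mat_of_cols 3 [?u,?v,?w]"
  have B: "B \<in> carrier_mat 3 3" unfolding B_def mat_of_cols_def by auto
  have cB: "cols B = [?u,?v,?w]" unfolding B_def using A ijk by (simp add: cols_mat_of_cols)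
  have D3a: "D3 u u w = 0" "D3 u v u = 0" "D3 u v v = 0" for u v w
    unfolding D3_def by (simp_all add: algebra_simps)
  have dist: "distinct [?u,?v,?w]" using D D3a by auto
  have indep: "\<not> module.lin_dep class_ring (module_vec TYPE(rat) 3) (set (cols B))"
  proof
    assume "module.lin_dep class_ring (module_vec TYPE(rat) 3) (set (cols B))"
    then obtain a where a: "a \<in> carrier_vec 3" "a \<noteq> 0\<^sub>v 3" "B *\<^sub>v a = 0\<^sub>v 3"
      using vec_space.lin_depE[OF B] dist cB by metis
    have e: "?u$r*a$0 + ?v$r*a$1 + ?w$r*a$2 = 0" if "r < 3" for r
      using arg_cong[OF a(3), of "\<lambda>x. x $ r"] mv3[OF a(1) that] that unfolding B_def by simp
    note e0 = e[of 0] and e1 = e[of 1] and e2 = e[of 2]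
    have L: "D3 u v w * a0 = (v$1*w$2 - v$2*w$1)*(u$0*a0+v$0*a1+w$0*a2) - (v$0*w$2-v$2*w$0)*(u$1*a0+v$1*a1+w$1*a2) + (v$0*w$1 - v$1*w$0)*(u$2*a0+v$2*a1+w$2*a2)"
        for u v w :: "rat vec" and a0 a1 a2 unfolding D3_def by (rule cof)
    have C1: "D3 u v w = D3 v w u" "D3 u v w = D3 w u v" for u v w unfolding D3_def by (rule cyc1, rule cyc2)
    have "D3 ?u ?v ?w * a$0 = 0" using L[of ?u ?v ?w "a$0" "a$1" "a$2"] e0 e1 e2 by simp
    have f: "?v$r*a$1 + ?w$r*a$2 + ?u$r*a$0 = 0" "?w$r*a$2 + ?u$r*a$0 + ?v$r*a$1 = 0" if "r < 3" for r
      using e[OF that] by (simp_all only: ac_simps)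
    have g0: "D3 ?u ?v ?w * a$0 = 0" using L[of ?u ?v ?w "a$0" "a$1" "a$2"] e0 e1 e2 by simp
    have "D3 ?v ?w ?u * a$1 = 0" using L[of ?v ?w ?u "a$1" "a$2" "a$0"] f(1)[of 0] f(1)[of 1] f(1)[of 2] by simp
    moreover have "D3 ?w ?u ?v * a$2 = 0" using L[of ?w ?u ?v "a$2" "a$0" "a$1"] f(2)[of 0] f(2)[of 1] f(2)[of 2] by simp
    ultimately have "D3 ?u ?v ?w * a$0 = 0" "D3 ?u ?v ?w * a$1 = 0" "D3 ?u ?v ?w * a$2 = 0" using C1 g0 by metis+
    then have "a$0 = 0" "a$1 = 0" "a$2 = 0" using D by auto
    then have "a = 0\<^sub>v 3" using a(1) by (auto intro!: eq_vecI simp: less_Suc_eq numeral_3_eq_3 numeral_2_eq_2)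
    then show False using a(2) by simp
  qed
  have cin: "col A c \<in> set (cols A)" if "c < nc" for c
    using A that by (metis cols_length cols_nth carrier_matD(2) nth_mem)
  have "card (set (cols B)) \<le> vec_space.rank 3 A"
    by (rule vec_space.rank_ge_card_indpt[OF A _ indep]) (use cB cin ijk in auto)
  moreover have "card (set (cols B)) = 3" using cB dist by (simp add: distinct_card)
  ultimately show ?thesis by simp
qed
lemma no_sqrt2: fixes r :: rat assumes "r^2 = 2" shows False
proof -
  obtain a b where ab: "quotient_of r = (a,b)" by (cases "quotient_of r")
  have b0: "b > 0" using ab quotient_of_denom_pos by blast
  have cop: "coprime a b" using ab quotient_of_coprime by blast
  have r: "r = of_int a / of_int b" using ab quotient_of_div by blast
  have "(of_int a / of_int b :: rat)^2 = 2" using assms r by simp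
  then have "(of_int (a^2) :: rat) = of_int (2*b^2)" using b0 by (simp add: field_simps power_divide)
  then have e: "a^2 = 2*b^2" by linarith
  then have "even (a^2)" by simp
  then have "even a" by simp
  then obtain k where k: "a = 2*k" by blast
  then have "b^2 = 2*k^2" using e by (simp add: power_mult_distrib)
  then have "even (b^2)" by simp
  then have "even b" by simp
  then show False using cop \<open>even a\<close> using coprime_common_divisor[OF cop, of 2] \<open>even b\<close> by auto
qed

lemma no_sqrt2': fixes x d :: rat assumes "x > 0" "2*x^2 - d^2 = 0" shows False
  using no_sqrt2[of "d/x"] assms by (simp add: power_divide field_simps)

lemma Nmat_carrier: "Nmat x1 x2 x3 d1 d2 d3 \<in> carrier_mat 3 7"
  unfolding Nmat_def mat_of_rows_list_def by (simp add: carrier_matI)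

lemma Nmat_M1:
  assumes "rank3 (Nmat x1 x2 x3 d1 d2 d3) \<le> 2"
  shows "(d2*x3-d3*x2) - (d1*x3-d3*x1) + (d1*x2-d2*x1) = 0"
proof (rule ccontr)
  assume H: "\<not> ?thesis"
  have "D3 (col (Nmat x1 x2 x3 d1 d2 d3) 0) (col (Nmat x1 x2 x3 d1 d2 d3) 1) (col (Nmat x1 x2 x3 d1 d2 d3) 2) \<noteq> 0"
    using H by (simp add: D3_def Nmat_def mat_of_rows_list_def Nrow_def)
  from rank_ge3[OF Nmat_carrier _ _ _ this] assms show False by (simp add: rank3_def)
qed

lemma Nmat_M2:
  assumes "rank3 (Nmat x1 x2 x3 d1 d2 d3) \<le> 2"
  shows "(d2*d3^2-d3*d2^2) - (d1*d3^2-d3*d1^2) + (d1*d2^2-d2*d1^2) = 0"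
proof (rule ccontr)
  assume H: "\<not> ?thesis"
  have "D3 (col (Nmat x1 x2 x3 d1 d2 d3) 0) (col (Nmat x1 x2 x3 d1 d2 d3) 1) (col (Nmat x1 x2 x3 d1 d2 d3) 5) \<noteq> 0"
    using H by (simp add: D3_def Nmat_def mat_of_rows_list_def Nrow_def)
  from rank_ge3[OF Nmat_carrier _ _ _ this] assms show False by (simp add: rank3_def)
qed

lemma N1_rank:
  assumes "rank3 (N1mat d1 d2 d3) = 2"
  shows "\<not> (d1 = d2 \<and> d2 = d3)"
proof
  assume e: "d1 = d2 \<and> d2 = d3"
  have "vec_space.rank 3 (N1mat d1 d2 d3) \<le> 1"
  proof (rule vec_space.rank_le_1_product_entries[where f = "\<lambda>_. 1" and g = "\<lambda>c. if c = 0 then 1 else d1"])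
    show "N1mat d1 d2 d3 \<in> carrier_mat 3 2" unfolding N1mat_def mat_of_rows_list_def by (simp add: carrier_matI)
    fix r c assume "r < dim_row (N1mat d1 d2 d3)" "c < dim_col (N1mat d1 d2 d3)"
    then have "r < 3" "c < 2" by (auto simp: N1mat_def mat_of_rows_list_def)
    then show "N1mat d1 d2 d3 $$ (r, c) = 1 * (if c = 0 then 1 else d1)"
      using e by (auto simp: N1mat_def mat_of_rows_list_def less_Suc_eq numeral_3_eq_3 numeral_2_eq_2)
  qed
  then show False using assms by (simp add: rank3_def)
qed

lemma key:
  fixes x1 x2 x3 d1 d2 d3 :: rat
  assumes "rank3 (Nmat x1 x2 x3 d1 d2 d3) \<le> 2" "rank3 (N1mat d1 d2 d3) = 2"
  shows "(d1 = d2 \<and> x1 = x2 \<and> d3 \<noteq> d1) \<or> (d2 = d3 \<and> x2 = x3 \<and> d1 \<noteq> d2) \<or> (d1 = d3 \<and> x1 = x3 \<and> d2 \<noteq> d1)"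
proof -
  have M1: "(d2*x3-d3*x2) - (d1*x3-d3*x1) + (d1*x2-d2*x1) = 0" by (rule Nmat_M1[OF assms(1)])
  have M2: "(d2*d3^2-d3*d2^2) - (d1*d3^2-d3*d1^2) + (d1*d2^2-d2*d1^2) = 0" by (rule Nmat_M2[OF assms(1)])
  have ne: "\<not> (d1 = d2 \<and> d2 = d3)" by (rule N1_rank[OF assms(2)])
  have "(d1-d2)*(d2-d3)*(d3-d1) = 0" using M2 by (simp add: power2_eq_square algebra_simps)
  then have "d1 = d2 \<or> d2 = d3 \<or> d3 = d1" by auto
  then show ?thesis
  proof (elim disjE)
    assume e: "d1 = d2"
    then have "d3 \<noteq> d1" using ne by auto
    moreover have "(x1-x2)*(d3-d1) = 0" using M1 e by (simp add: algebra_simps)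
    ultimately show ?thesis using e by auto
  next
    assume e: "d2 = d3"
    then have "d1 \<noteq> d2" using ne by auto
    moreover have "(x2-x3)*(d1-d2) = 0" using M1 e by (simp add: algebra_simps)
    ultimately show ?thesis using e by auto
  next
    assume e: "d3 = d1"
    then have "d2 \<noteq> d1" using ne by auto
    moreover have "(x1-x3)*(d2-d1) = 0" using M1 e by (simp add: algebra_simps)
    ultimately show ?thesis using e by auto
  qed
qed

lemma lin3: fixes a b c e f :: rat
  assumes "a + b + c = 0" "e*a + e*b + f*c = 0" shows "(f - e)*c = 0"
proof -
  have "a + b = - c" using assms(1) by simp
  then have "e*(a+b) = -(e*c)" by simp
  then show ?thesis using assms(2) by (simp add: algebra_simps)
qed

theorem theorem6p1:
  shows "\<not> (\<exists>x1 x2 x3 d1 d2 d3 L :: rat.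
            x1 > 0 \<and> x2 > 0 \<and> x3 > 0 \<and> d1 > 0 \<and> d2 > 0 \<and> d3 > 0 \<and>
            rank3 (Nmat x1 x2 x3 d1 d2 d3) \<le> 2 \<and>
            rank3 (N1mat d1 d2 d3) = 2 \<and> rank3 (N2mat x1 x2 x3) = 2 \<and>
            pt2 x1 x2 x3 d1 d2 d3 = 0 \<and> pt3 x1 x2 x3 d1 d2 d3 = 0 \<and>
            pt4 x1 x2 x3 d1 d2 d3 = 0 \<and> pt5 x1 x2 x3 d1 d2 d3 = 0 \<and>
            pt6 x1 x2 x3 d1 d2 d3 = 0 \<and> pt7 x1 x2 x3 d1 d2 d3 = 0 \<and>
            pt8 x1 x2 x3 d1 d2 d3 = 0)
       \<and> \<not> (\<exists>x1 x2 x3 d1 d2 d3 L :: rat.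
            x1 > 0 \<and> x2 > 0 \<and> x3 > 0 \<and> d1 > 0 \<and> d2 > 0 \<and> d3 > 0 \<and>
            rank3 (Nmat x1 x2 x3 d1 d2 d3) \<le> 2 \<and>
            rank3 (N1mat d1 d2 d3) = 2 \<and> rank3 (N2mat x1 x2 x3) = 2 \<and>
            p1 x1 x2 x3 d1 d2 d3 = 0 \<and> p2 x1 x2 x3 d1 d2 d3 = 0 \<and>
            p3 x1 x2 x3 d1 d2 d3 = 0)"
proof (intro conjI notI; elim exE conjE)
  fix x1 x2 x3 d1 d2 d3 :: rat
  assume pos: "x1 > 0" "x2 > 0" "x3 > 0"
    and r: "rank3 (Nmat x1 x2 x3 d1 d2 d3) \<le> 2" "rank3 (N1mat d1 d2 d3) = 2"
    and q2: "pt2 x1 x2 x3 d1 d2 d3 = 0" and q3: "pt3 x1 x2 x3 d1 d2 d3 = 0"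
  let ?P1 = "x2^2 + x3^2 - d1^2" let ?P2 = "x3^2 + x1^2 - d2^2" let ?P3 = "x1^2 + x2^2 - d3^2"
  have s: "?P1 + ?P2 + ?P3 = 0" using q2 by (simp add: pt2_def pcomb_def p1_def p2_def p3_def)
  have t: "d1 * ?P1 + d2 * ?P2 + d3 * ?P3 = 0" using q3 by (simp add: pt3_def pcomb_def p1_def p2_def p3_def)
  from key[OF r] show False
  proof (elim disjE conjE)
    assume e: "d1 = d2" "x1 = x2" "d3 \<noteq> d1"
    have "(d3 - d1) * ?P3 = 0" using lin3[of ?P1 ?P2 ?P3 d1 d3] s t e(1) by simp
    then have "?P3 = 0" using e(3) by simp
    then show False using no_sqrt2'[of x1 d3] pos e by (simp add: power2_eq_square)
  next
    assume e: "d2 = d3" "x2 = x3" "d1 \<noteq> d2"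
    have s': "?P2 + ?P3 + ?P1 = 0" using s by (simp only: ac_simps)
    have t': "d2 * ?P2 + d3 * ?P3 + d1 * ?P1 = 0" using t by (simp only: ac_simps)
    have "(d1 - d2) * ?P1 = 0" using lin3[of ?P2 ?P3 ?P1 d2 d1] s' t' e(1) by simp
    then have "?P1 = 0" using e(3) by simp
    then show False using no_sqrt2'[of x2 d1] pos e by (simp add: power2_eq_square)
  next
    assume e: "d1 = d3" "x1 = x3" "d2 \<noteq> d1"
    have s': "?P1 + ?P3 + ?P2 = 0" using s by (simp only: ac_simps)
    have t': "d1 * ?P1 + d3 * ?P3 + d2 * ?P2 = 0" using t by (simp only: ac_simps)
    have "(d2 - d1) * ?P2 = 0" using lin3[of ?P1 ?P3 ?P2 d1 d2] s' t' e(1) by simp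
    then have "?P2 = 0" using e(3) by simp
    then show False using no_sqrt2'[of x1 d2] pos e by (simp add: power2_eq_square)
  qed
next
  fix x1 x2 x3 d1 d2 d3 :: rat
  assume pos: "x1 > 0" "x2 > 0" "x3 > 0"
    and r: "rank3 (Nmat x1 x2 x3 d1 d2 d3) \<le> 2" "rank3 (N1mat d1 d2 d3) = 2"
    and q: "p1 x1 x2 x3 d1 d2 d3 = 0" "p2 x1 x2 x3 d1 d2 d3 = 0" "p3 x1 x2 x3 d1 d2 d3 = 0"
  from key[OF r] show False
  proof (elim disjE conjE)
    assume e: "d1 = d2" "x1 = x2" "d3 \<noteq> d1"
    then show False using no_sqrt2'[of x1 d3] pos q by (simp add: p3_def power2_eq_square)
  next
    assume e: "d2 = d3" "x2 = x3" "d1 \<noteq> d2"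
    then show False using no_sqrt2'[of x2 d1] pos q by (simp add: p1_def power2_eq_square)
  next
    assume e: "d1 = d3" "x1 = x3" "d2 \<noteq> d1"
    then show False using no_sqrt2'[of x1 d2] pos q by (simp add: p2_def power2_eq_square)
  qed
qed

end
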